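(* Let $G$ be a second countable locally compact group and $\Omega\subseteq G\times G$ a set invariant under all maps $(s,t)\mapsto(sr,tr)$, $r\in G$. Then $\Omega$ is marginally equivalent to an $\omega$-closed set if and only if it is marginally equivalent to a topologically closed set.
   Context: $G$ carries left Haar measure. A set $\Omega\subseteq G\times G$ is marginally null if $\Omega\subseteq(X\times G)\cup(G\times X)$ for some Haar-null $X\subseteq G$; two sets are marginally equivalent if their symmetric difference is marginally null. A set is $\omega$-open if it is marginally equivalent to a countable union of Borel rectangles $A\times B$, and $\omega$-closed if its complement is $\omega$-open. *)

theory Defs
  imports "HOL-Analysis.Analysis"
begin

text \<open>The group G is a type of class group_add (written additively; NOT assumed
commutative), carrying a Hausdorff second countable topology.\<close>

definition topological_group :: "'a::{group_add,topological_space} itself \<Rightarrow> bool" where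
  "topological_group _ \<longleftrightarrow>
     continuous_on UNIV (\<lambda>p::'a \<times> 'a. fst p + snd p) \<and> continuous_on UNIV (uminus :: 'a \<Rightarrow> 'a)"

definition locally_compact_group :: "'a::{group_add,topological_space} itself \<Rightarrow> bool" where
  "locally_compact_group T \<longleftrightarrow> topological_group T \<and>
     (\<forall>x::'a. \<exists>U K. open U \<and> compact K \<and> x \<in> U \<and> U \<subseteq> K)"

definition left_haar_measure :: "'a::{group_add,topological_space} measure \<Rightarrow> bool" where
  "left_haar_measure \<mu> \<longleftrightarrow> sets \<mu> = sets borel \<and>
     (\<forall>g A. A \<in> sets borel \<longrightarrow> emeasure \<mu> ((\<lambda>x. g + x) ` A) = emeasure \<mu> A) \<and>
     (\<forall>K. compact K \<longrightarrow> emeasure \<mu> K < \<infinity>) \<and>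
     (\<forall>U. open U \<and> U \<noteq> {} \<longrightarrow> emeasure \<mu> U > 0)"

definition haar_null :: "'a measure \<Rightarrow> 'a set \<Rightarrow> bool" where
  "haar_null \<mu> X \<longleftrightarrow> (\<exists>N \<in> sets \<mu>. X \<subseteq> N \<and> emeasure \<mu> N = 0)"

definition marginally_null :: "'a measure \<Rightarrow> ('a \<times> 'a) set \<Rightarrow> bool" where
  "marginally_null \<mu> \<Omega> \<longleftrightarrow> (\<exists>X. haar_null \<mu> X \<and> \<Omega> \<subseteq> (X \<times> UNIV) \<union> (UNIV \<times> X))"

definition marg_equiv :: "'a measure \<Rightarrow> ('a \<times> 'a) set \<Rightarrow> ('a \<times> 'a) set \<Rightarrow> bool" where
  "marg_equiv \<mu> \<Omega> \<Omega>' \<longleftrightarrow> marginally_null \<mu> ((\<Omega> - \<Omega>') \<union> (\<Omega>' - \<Omega>))"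

definition omega_open :: "'a::topological_space measure \<Rightarrow> ('a \<times> 'a) set \<Rightarrow> bool" where
  "omega_open \<mu> \<Omega> \<longleftrightarrow> (\<exists>A B :: nat \<Rightarrow> 'a set.
     (\<forall>n. A n \<in> sets borel \<and> B n \<in> sets borel) \<and> marg_equiv \<mu> \<Omega> (\<Union>n. A n \<times> B n))"

definition omega_closed :: "'a::topological_space measure \<Rightarrow> ('a \<times> 'a) set \<Rightarrow> bool" where
  "omega_closed \<mu> \<Omega> \<longleftrightarrow> omega_open \<mu> (- \<Omega>)"

end

theory Submission imports Defs begin

lemma approx_finite_union:
  fixes \<nu> :: "'b::topological_space measure" and F :: "nat \<Rightarrow> 'b set"
  assumes fm: "finite_measure \<nu>" and sb: "sets \<nu> = sets borel"
    and F: "\<And>n. closed (F n)" and e: "e > 0"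
  shows "\<exists>k. measure \<nu> ((\<Union>n. F n) - (\<Union>i\<le>k. F i)) < e"
proof -
  define G where "G k = (\<Union>i\<le>k. F i)" for k
  have Gs: "range G \<subseteq> sets \<nu>" unfolding G_def sb using F by (auto intro!: borel_closed closed_UN)
  have "incseq G" unfolding G_def incseq_def by (auto intro: order_trans)
  have UG: "(\<Union>k. G k) = (\<Union>n. F n)" unfolding G_def by auto
  have "(\<lambda>k. measure \<nu> (G k)) \<longlonglongrightarrow> measure \<nu> (\<Union>n. F n)"
    using finite_measure.finite_Lim_measure_incseq[OF fm Gs \<open>incseq G\<close>] UG by simp
  from order_tendstoD(1)[OF this, of "measure \<nu> (\<Union>n. F n) - e"] e
  obtain k where k: "measure \<nu> (\<Union>n. F n) - e < measure \<nu> (G k)"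
    by (auto simp: eventually_sequentially)
  have "(\<Union>n. F n) \<in> sets \<nu>" unfolding sb using F by (auto intro!: borel_closed)
  moreover have "G k \<in> sets \<nu>" using Gs by auto
  moreover have "G k \<subseteq> (\<Union>n. F n)" unfolding G_def by auto
  ultimately have "measure \<nu> ((\<Union>n. F n) - G k) = measure \<nu> (\<Union>n. F n) - measure \<nu> (G k)"
    by (rule finite_measure.finite_measure_Diff[OF fm])
  then show ?thesis using k unfolding G_def by (intro exI[of _ k]) linarith
qed

lemma approx_closed_open:
  fixes \<nu> :: "'b::topological_space measure"
  assumes fm: "finite_measure \<nu>" and sb: "sets \<nu> = sets borel"
    and Fs: "\<And>V::'b set. open V \<Longrightarrow> \<exists>F::nat \<Rightarrow> 'b set. (\<forall>n. closed (F n)) \<and> V = (\<Union>n. F n)"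
    and S: "S \<in> sets borel"
  shows "\<forall>e>0. \<exists>F U. closed F \<and> open U \<and> F \<subseteq> S \<and> S \<subseteq> U \<and> measure \<nu> (U - F) < e"
proof -
  have "S \<in> sigma_sets UNIV {S. open S}" using S by (simp add: sets_borel)
  then show ?thesis
  proof (induction rule: sigma_sets.induct)
    case (Basic a)
    then have "open a" by simp
    from Fs[OF this] obtain F :: "nat \<Rightarrow> 'b set" where F: "\<And>n. closed (F n)" "a = (\<Union>n. F n)" by blast
    show ?case
    proof (intro allI impI)
      fix e :: real assume "e > 0"
      from approx_finite_union[where F=F, OF fm sb F(1) this] obtain k
        where "measure \<nu> ((\<Union>n. F n) - (\<Union>i\<le>k. F i)) < e" by blast
      moreover have "closed (\<Union>i\<le>k. F i)" using F(1) by (auto intro!: closed_UN)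
      ultimately show "\<exists>F' U. closed F' \<and> open U \<and> F' \<subseteq> a \<and> a \<subseteq> U \<and> measure \<nu> (U - F') < e"
        using F(2) \<open>open a\<close> by (intro exI[of _ "\<Union>i\<le>k. F i"] exI[of _ a]) auto
    qed
  next
    case Empty
    show ?case
    proof (intro allI impI)
      fix e :: real assume "e > 0"
      then show "\<exists>F U. closed F \<and> open U \<and> F \<subseteq> {} \<and> {} \<subseteq> U \<and> measure \<nu> (U - F) < e"
        by (intro exI[of _ "{}"] conjI) auto
    qed
  next
    case (Compl a)
    show ?case
    proof (intro allI impI)
      fix e :: real assume "e > 0"
      with Compl.IH obtain F U where FU: "closed F" "open U" "F \<subseteq> a" "a \<subseteq> U" "measure \<nu> (U - F) < e"
        by meson
      have eq: "(UNIV - F) - (UNIV - U) = U - F" by blast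
      have "closed (UNIV - U)" using FU(2) by (simp add: closed_Diff)
      moreover have "open (UNIV - F)" using FU(1) by (simp add: open_Diff)
      moreover have "UNIV - U \<subseteq> UNIV - a" "UNIV - a \<subseteq> UNIV - F" using FU(3,4) by blast+
      moreover have "measure \<nu> ((UNIV - F) - (UNIV - U)) < e" unfolding eq by (rule FU(5))
      ultimately show "\<exists>F' U'. closed F' \<and> open U' \<and> F' \<subseteq> UNIV - a \<and> UNIV - a \<subseteq> U' \<and> measure \<nu> (U' - F') < e"
        by blast
    qed
  next
    case (Union A)
    show ?case
    proof (intro allI impI)
      fix e :: real assume e: "e > 0"
      define d where "d i = (e/2) * (1/2)^Suc i" for i :: nat
      have dpos: "d i > 0" for i using e by (simp add: d_def)
      have dsums: "d sums (e/2)"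
        unfolding d_def using sums_mult[OF power_half_series, of "e/2"] by simp
      have "\<forall>i. \<exists>F U. closed F \<and> open U \<and> F \<subseteq> A i \<and> A i \<subseteq> U \<and> measure \<nu> (U - F) < d i"
        using Union.IH dpos by blast
      then obtain F U where FU: "\<And>i. closed (F i) \<and> open (U i) \<and> F i \<subseteq> A i \<and> A i \<subseteq> U i \<and> measure \<nu> (U i - F i) < d i"
        by metis
      have Fcl: "\<And>i. closed (F i)" using FU by blast
      have sets1: "range (\<lambda>i. U i - F i) \<subseteq> sets \<nu>" unfolding sb using FU by (auto intro!: borel_closed borel_open)
      have summ: "summable (\<lambda>i. measure \<nu> (U i - F i))"
        by (rule summable_comparison_test[OF _ sums_summable[OF dsums]])
          (use FU in \<open>auto intro!: exI[of _ 0] less_imp_le\<close>)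
      have "measure \<nu> ((\<Union>i. U i) - (\<Union>i. F i)) \<le> measure \<nu> (\<Union>i. U i - F i)"
        by (rule finite_measure.finite_measure_mono[OF fm]) (use sets1 in auto)
      also have "\<dots> \<le> (\<Sum>i. measure \<nu> (U i - F i))"
        by (rule finite_measure.finite_measure_subadditive_countably[OF fm sets1 summ])
      also have "\<dots> \<le> (\<Sum>i. d i)"
        by (rule suminf_le[OF _ summ sums_summable[OF dsums]]) (use FU in \<open>auto intro: less_imp_le\<close>)
      also have "\<dots> = e/2" using dsums by (simp add: sums_iff)
      finally have m1: "measure \<nu> ((\<Union>i. U i) - (\<Union>i. F i)) \<le> e/2" .
      from approx_finite_union[where F=F and e="e/2", OF fm sb Fcl] e obtain k
        where m2: "measure \<nu> ((\<Union>n. F n) - (\<Union>i\<le>k. F i)) < e/2" by auto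
      have sU: "(\<Union>i. U i) - (\<Union>i. F i) \<in> sets \<nu>" "(\<Union>n. F n) - (\<Union>i\<le>k. F i) \<in> sets \<nu>"
        unfolding sb using FU by (auto intro!: borel_closed borel_open closed_UN)
      have "(\<Union>i. U i) - (\<Union>i\<le>k. F i) \<subseteq> ((\<Union>i. U i) - (\<Union>i. F i)) \<union> ((\<Union>n. F n) - (\<Union>i\<le>k. F i))"
        by blast
      then have "measure \<nu> ((\<Union>i. U i) - (\<Union>i\<le>k. F i))
          \<le> measure \<nu> (((\<Union>i. U i) - (\<Union>i. F i)) \<union> ((\<Union>n. F n) - (\<Union>i\<le>k. F i)))"
        by (rule finite_measure.finite_measure_mono[OF fm]) (use sU in auto)
      also have "\<dots> \<le> measure \<nu> ((\<Union>i. U i) - (\<Union>i. F i)) + measure \<nu> ((\<Union>n. F n) - (\<Union>i\<le>k. F i))"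
        by (rule measure_Un_le[OF sU])
      finally have "measure \<nu> ((\<Union>i. U i) - (\<Union>i\<le>k. F i)) < e" using m1 m2 by linarith
      moreover have "closed (\<Union>i\<le>k. F i)" using Fcl by (auto intro!: closed_UN)
      moreover have "open (\<Union>i. U i)" using FU by auto
      moreover have "(\<Union>i\<le>k. F i) \<subseteq> (\<Union>i. A i)" "(\<Union>i. A i) \<subseteq> (\<Union>i. U i)" using FU by blast+
      ultimately show "\<exists>F' U'. closed F' \<and> open U' \<and> F' \<subseteq> (\<Union>i. A i) \<and> (\<Union>i. A i) \<subseteq> U' \<and> measure \<nu> (U' - F') < e"
        by blast
    qed
  qed
qed

locale lcg =
  fixes \<mu> :: "'a::{group_add, t2_space, second_countable_topology} measure"
  assumes lc: "locally_compact_group TYPE('a)" and haar: "left_haar_measure \<mu>"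
begin

lemma sets_mu[simp, measurable_cong]: "sets \<mu> = sets borel"
  using haar by (simp add: left_haar_measure_def)

lemma space_mu[simp]: "space \<mu> = UNIV"
  by (metis sets_eq_imp_space_eq sets_mu space_borel)

lemma c1: "continuous_on UNIV (\<lambda>p::'a \<times> 'a. fst p + snd p)"
    using lc unfolding locally_compact_group_def topological_group_def by (elim conjE)
lemma c2: "continuous_on UNIV (uminus :: 'a \<Rightarrow> 'a)"
    using lc unfolding locally_compact_group_def topological_group_def by (elim conjE)

lemma cont_add:
  assumes "continuous_on UNIV f" "continuous_on UNIV g"
  shows "continuous_on UNIV (\<lambda>x. f x + g x :: 'a)"
proof -
  have "continuous_on UNIV ((\<lambda>p::'a \<times> 'a. fst p + snd p) \<circ> (\<lambda>x. (f x, g x)))"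
    by (rule continuous_on_compose[OF continuous_on_Pair[OF assms]]) (rule continuous_on_subset[OF c1], simp)
  then show ?thesis by (simp add: o_def)
qed

lemma cont_uminus:
  assumes "continuous_on UNIV f"
  shows "continuous_on UNIV (\<lambda>x. - f x :: 'a)"
proof -
  have "continuous_on UNIV (uminus \<circ> f)"
    by (rule continuous_on_compose[OF assms]) (rule continuous_on_subset[OF c2], simp)
  then show ?thesis by (simp add: o_def)
qed

lemma cont_diff:
  assumes "continuous_on UNIV f" "continuous_on UNIV g"
  shows "continuous_on UNIV (\<lambda>x. f x - g x :: 'a)"
proof -
  have "continuous_on UNIV (\<lambda>x. f x + - g x :: 'a)"
    by (rule cont_add[OF assms(1) cont_uminus[OF assms(2)]])
  then show ?thesis by (simp only: diff_conv_add_uminus)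
qed

lemma cont_transl: "continuous_on UNIV (\<lambda>x::'a. c + x)"
proof -
  have "continuous_on UNIV (\<lambda>x::'a. c)" by (rule continuous_on_const)
  moreover have "continuous_on UNIV (\<lambda>x::'a. x)" by (rule continuous_on_id)
  ultimately show ?thesis by (rule cont_add)
qed

lemma transl_eq: "(\<lambda>x::'a. g + x) ` A = (\<lambda>x. - g + x) -` A"
proof (rule set_eqI, rule iffI)
  fix x assume "x \<in> (\<lambda>x. g + x) ` A"
  then obtain y where "y \<in> A" "x = g + y" by blast
  then show "x \<in> (\<lambda>x. - g + x) -` A" by (simp add: add.assoc[symmetric])
next
  fix x assume "x \<in> (\<lambda>x. - g + x) -` A"
  then have "- g + x \<in> A" by simp
  moreover have "x = g + (- g + x)" by (simp add: add.assoc[symmetric])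
  ultimately show "x \<in> (\<lambda>x. g + x) ` A" by blast
qed

lemma transl_borel[measurable]: "A \<in> sets borel \<Longrightarrow> (\<lambda>x::'a. g + x) ` A \<in> sets borel"
  unfolding transl_eq
  by (rule measurable_sets_borel[OF borel_measurable_continuous_onI[OF cont_transl]])

lemma transl_emeasure: "A \<in> sets borel \<Longrightarrow> emeasure \<mu> ((\<lambda>x. g + x) ` A) = emeasure \<mu> A"
  using haar by (simp add: left_haar_measure_def)

lemma compact_finite: "compact K \<Longrightarrow> emeasure \<mu> K < \<infinity>"
  using haar by (simp add: left_haar_measure_def)

lemma open_pos: "open U \<Longrightarrow> U \<noteq> {} \<Longrightarrow> emeasure \<mu> U > 0"
  using haar by (simp add: left_haar_measure_def)

lemma lc_nbhd:
  fixes W :: "'a set"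
  assumes "open W" "x \<in> W"
  shows "\<exists>U V. open U \<and> compact V \<and> x \<in> U \<and> U \<subseteq> V \<and> V \<subseteq> W"
proof -
  have lc': "\<forall>x::'a. \<exists>U K. open U \<and> compact K \<and> x \<in> U \<and> U \<subseteq> K"
    using lc unfolding locally_compact_group_def by (elim conjE)
  have "locally_compact_space (euclidean :: 'a topology)"
    unfolding locally_compact_space_def topspace_euclidean open_openin[symmetric] compactin_euclidean_iff
    using lc' by blast
  then have "neighbourhood_base_of (compactin euclidean) (euclidean :: 'a topology)"
  proof -
    have H: "Hausdorff_space (euclidean :: 'a topology)" 
      unfolding Hausdorff_space_def topspace_euclidean open_openin[symmetric] disjnt_def
      by (metis UNIV_I hausdorff)
    show ?thesis
      by (rule iffD1[OF locally_compact_space_neighbourhood_base[OF disjI1[OF H]]]) fact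
  qed
  then have "\<forall>W x. open W \<and> x \<in> W
          \<longrightarrow> (\<exists>U V. open U \<and> compact V \<and> x \<in> U \<and> U \<subseteq> V \<and> (V::'a set) \<subseteq> W)"
    using \<open>neighbourhood_base_of (compactin euclidean) (euclidean :: 'a topology)\<close>
    unfolding neighbourhood_base_of by simp
  from this[rule_format, OF conjI[OF assms]] show ?thesis .
qed

lemma open_sigma_compact:
  fixes V :: "'a set"
  assumes "open V"
  shows "\<exists>K::nat \<Rightarrow> 'a set. (\<forall>n. compact (K n)) \<and> V = (\<Union>n. K n)"
proof -
  obtain BB :: "'a set set" where BB: "countable BB" "topological_basis BB"
    using ex_countable_basis by blast
  define S where "S = {b \<in> BB. \<exists>K. compact K \<and> b \<subseteq> K \<and> K \<subseteq> V}"
  have "\<forall>b\<in>S. \<exists>K. compact K \<and> b \<subseteq> K \<and> K \<subseteq> V" unfolding S_def by blast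
  then obtain kk where kk: "\<And>b. b \<in> S \<Longrightarrow> compact (kk b) \<and> b \<subseteq> kk b \<and> kk b \<subseteq> V"
    by metis
  have cover: "V = \<Union>(kk ` S)"
  proof
    show "\<Union>(kk ` S) \<subseteq> V" using kk by blast
  next
    show "V \<subseteq> \<Union>(kk ` S)"
    proof
      fix x assume "x \<in> V"
      from lc_nbhd[OF assms this] obtain U C where UC: "open U" "compact C" "x \<in> U" "U \<subseteq> C" "C \<subseteq> V"
        by blast
      from topological_basisE[OF BB(2) UC(1) UC(3)] obtain b where b: "b \<in> BB" "x \<in> b" "b \<subseteq> U" .
      have "b \<in> S" unfolding S_def using b UC by blast
      then show "x \<in> \<Union>(kk ` S)" using kk[OF \<open>b \<in> S\<close>] b by blast
    qed
  qed
  define T where "T = insert {} (kk ` S)"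
  have "countable S" by (rule countable_subset[OF _ BB(1)]) (auto simp: S_def)
  then have cT: "countable T" unfolding T_def by (intro countable_insert countable_image)
  have rT: "range (from_nat_into T) = T"
    by (rule range_from_nat_into[OF _ cT]) (simp add: T_def)
  have "\<forall>n. compact (from_nat_into T n)"
  proof
    fix n
    have "from_nat_into T n \<in> T" using rT by blast
    then consider "from_nat_into T n = {}" | b where "b \<in> S" "from_nat_into T n = kk b"
      unfolding T_def by blast
    then show "compact (from_nat_into T n)"
    proof cases
      case 1 then show ?thesis by simp
    next
      case 2 then show ?thesis using kk by simp
    qed
  qed
  moreover have "V = (\<Union>n. from_nat_into T n)"
  proof -
    have "(\<Union>n. from_nat_into T n) = \<Union>T" using rT by simp
    also have "\<dots> = \<Union>(kk ` S)" unfolding T_def by simp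
    finally have "(\<Union>n. from_nat_into T n) = \<Union>(kk ` S)" .
    from cover this show ?thesis by (rule trans_sym)
  qed
  ultimately show ?thesis by (intro exI[of _ "from_nat_into T"] conjI)
qed

lemma compact_in_finite_open:
  fixes K :: "'a set"
  assumes "compact K"
  shows "\<exists>Op. open Op \<and> K \<subseteq> Op \<and> emeasure \<mu> Op < \<infinity>"
proof -
  have "\<forall>x::'a. \<exists>U C. open U \<and> compact C \<and> x \<in> U \<and> U \<subseteq> C"
  proof
    fix x :: 'a show "\<exists>U C. open U \<and> compact C \<and> x \<in> U \<and> U \<subseteq> C"
      using lc_nbhd[OF open_UNIV UNIV_I, of x] by (elim exE conjE) (intro exI conjI)
  qed
  then obtain uu cc where ucc: "\<And>x::'a. open (uu x) \<and> compact (cc x) \<and> x \<in> uu x \<and> uu x \<subseteq> cc x"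
    by metis
  have "K \<subseteq> (\<Union>x\<in>K. uu x)" using ucc by blast
  from compactE_image[OF assms _ this] ucc obtain T where T: "T \<subseteq> K" "finite T" "K \<subseteq> (\<Union>x\<in>T. uu x)"
    by metis
  have cC: "compact (\<Union>x\<in>T. cc x)" by (rule compact_UN[OF T(2)]) (use ucc in blast)
  then have "emeasure \<mu> (\<Union>x\<in>T. cc x) < \<infinity>" by (rule compact_finite)
  moreover have "emeasure \<mu> (\<Union>x\<in>T. uu x) \<le> emeasure \<mu> (\<Union>x\<in>T. cc x)"
    by (rule emeasure_mono) (use ucc cC in \<open>auto intro!: borel_closed compact_imp_closed\<close>)
  ultimately show ?thesis using T ucc by (intro exI[of _ "\<Union>x\<in>T. uu x"]) auto
qed

lemma outer_compact:
  fixes K :: "'a set"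
  assumes "compact K" "emeasure \<mu> K > 0"
  shows "\<exists>U. open U \<and> K \<subseteq> U \<and> emeasure \<mu> U < emeasure \<mu> K + emeasure \<mu> K"
proof -
  obtain Op where Op: "open Op" "K \<subseteq> Op" "emeasure \<mu> Op < \<infinity>"
    using compact_in_finite_open[OF assms(1)] by blast
  have "open (Op - K)" using Op(1) assms(1) by (simp add: open_Diff compact_imp_closed)
  from open_sigma_compact[OF this] obtain Kc :: "nat \<Rightarrow> 'a set" where Kc: "\<And>n. compact (Kc n)" "Op - K = (\<Union>n. Kc n)"
    by blast
  define U where "U n = Op - (\<Union>i\<le>n. Kc i)" for n
  have openU: "open (U n)" for n
    unfolding U_def using Op(1) Kc(1) by (intro open_Diff closed_UN) (auto intro: compact_imp_closed)
  have "decseq U" unfolding U_def decseq_def by auto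
  have fin: "emeasure \<mu> (U n) \<noteq> \<infinity>" for n
  proof -
    have "emeasure \<mu> (U n) \<le> emeasure \<mu> Op"
      by (rule emeasure_mono) (auto simp: U_def Op(1))
    then show ?thesis using Op(3) by (auto simp: top_unique)
  qed
  have inter: "(\<Inter>n. U n) = K"
  proof
    show "K \<subseteq> (\<Inter>n. U n)" using Op(2) Kc(2) by (auto simp: U_def)
  next
    show "(\<Inter>n. U n) \<subseteq> K"
    proof
      fix x assume x: "x \<in> (\<Inter>n. U n)"
      then have "x \<in> Op" by (auto simp: U_def)
      moreover have "x \<notin> (\<Union>n. Kc n)" using x by (auto simp: U_def)
      ultimately show "x \<in> K" using Kc(2) by blast
    qed
  qed
  have "(INF n. emeasure \<mu> (U n)) = emeasure \<mu> K"
  proof -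
    have "range U \<subseteq> sets \<mu>" using openU by auto
    from INF_emeasure_decseq[of U \<mu>, OF this \<open>decseq U\<close> fin] show ?thesis using inter by simp
  qed
  moreover have Kfin: "emeasure \<mu> K \<noteq> \<infinity>" using compact_finite[OF assms(1)] by simp
  moreover have "emeasure \<mu> K + 0 < emeasure \<mu> K + emeasure \<mu> K"
    using Kfin assms(2) by (simp only: ennreal_add_left_cancel_less) simp
  ultimately have "(INF n. emeasure \<mu> (U n)) < emeasure \<mu> K + emeasure \<mu> K" by simp
  then obtain n where "emeasure \<mu> (U n) < emeasure \<mu> K + emeasure \<mu> K"
    by (auto simp: INF_less_iff)
  moreover have "K \<subseteq> U n" using Op(2) Kc(2) by (auto simp: U_def)
  ultimately show ?thesis using openU by blast
qed

lemma compact_borel: "compact (K::'a set) \<Longrightarrow> K \<in> sets borel"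
  by (simp add: borel_closed compact_imp_closed)

lemma inner_compact:
  fixes C :: "'a set"
  assumes C: "C \<in> sets borel" and pos: "emeasure \<mu> C > 0"
  shows "\<exists>K. compact K \<and> K \<subseteq> C \<and> emeasure \<mu> K > 0"
proof -
  obtain Kn :: "nat \<Rightarrow> 'a set" where Kn: "\<And>n. compact (Kn n)" "UNIV = (\<Union>n. Kn n)"
    using open_sigma_compact[OF open_UNIV] by blast
  have "\<exists>n. emeasure \<mu> (C \<inter> Kn n) \<noteq> 0"
  proof (rule ccontr)
    assume "\<not> ?thesis"
    then have "\<And>n. emeasure \<mu> (C \<inter> Kn n) = 0" by blast
    moreover have "range (\<lambda>n. C \<inter> Kn n) \<subseteq> sets \<mu>" using C compact_borel[OF Kn(1)] by auto
    ultimately have "emeasure \<mu> (\<Union>n. C \<inter> Kn n) = 0" by (rule emeasure_UN_eq_0)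
    moreover have "(\<Union>n. C \<inter> Kn n) = C" using Kn(2) by blast
    ultimately show False using pos by simp
  qed
  then obtain n where n: "emeasure \<mu> (C \<inter> Kn n) \<noteq> 0" by blast
  define L where "L = Kn n"
  define S where "S = C \<inter> L"
  have L: "compact L" "L \<in> sets \<mu>" unfolding L_def using Kn(1) by (auto intro!: borel_closed compact_imp_closed)
  have Sb: "S \<in> sets borel" unfolding S_def using C L by auto
  define \<nu> where "\<nu> = density \<mu> (indicator L)"
  have snu: "sets \<nu> = sets borel" unfolding \<nu>_def by simp
  have enu: "emeasure \<nu> A = emeasure \<mu> (L \<inter> A)" if "A \<in> sets borel" for A
    unfolding \<nu>_def by (rule emeasure_restricted) (use L that in auto)
  have fm: "finite_measure \<nu>"
  proof (rule finite_measureI)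
    have "space \<nu> = UNIV" unfolding \<nu>_def by simp
    then have "emeasure \<nu> (space \<nu>) = emeasure \<mu> L" using enu[of UNIV] by simp
    then show "emeasure \<nu> (space \<nu>) \<noteq> \<infinity>" using compact_finite[OF L(1)] by simp
  qed
  have Fs: "\<And>V::'a set. open V \<Longrightarrow> \<exists>F::nat \<Rightarrow> 'a set. (\<forall>n. closed (F n)) \<and> V = (\<Union>n. F n)"
    using open_sigma_compact compact_imp_closed by metis
  have eS: "emeasure \<nu> S = emeasure \<mu> S" using enu[OF Sb] unfolding S_def by (simp add: Int_commute inf_left_commute)
  have mS: "measure \<nu> S > 0"
  proof -
    have "emeasure \<nu> S = ennreal (measure \<nu> S)" by (rule finite_measure.emeasure_eq_measure[OF fm])
    moreover have "emeasure \<nu> S \<noteq> 0" using eS n unfolding S_def L_def by simp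
    ultimately show ?thesis by (metis ennreal_0 measure_nonneg order_le_less)
  qed
  from approx_closed_open[OF fm snu Fs Sb] mS obtain F U
    where FU: "closed F" "open U" "F \<subseteq> S" "S \<subseteq> U" "measure \<nu> (U - F) < measure \<nu> S"
    by blast
  have Fb: "F \<in> sets \<nu>" using FU(1) snu by (simp add: borel_closed)
  have "measure \<nu> (S - F) \<le> measure \<nu> (U - F)"
    by (rule finite_measure.finite_measure_mono[OF fm]) (use FU snu in \<open>auto intro!: borel_closed borel_open\<close>)
  moreover have "measure \<nu> (S - F) = measure \<nu> S - measure \<nu> F"
    by (rule finite_measure.finite_measure_Diff[OF fm]) (use Sb snu Fb FU(3) in auto)
  ultimately have mF: "measure \<nu> F > 0" using FU(5) by linarith
  have "emeasure \<nu> F = ennreal (measure \<nu> F)" by (rule finite_measure.emeasure_eq_measure[OF fm])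
  then have "emeasure \<nu> F > 0" using mF by simp
  moreover have "emeasure \<nu> F = emeasure \<mu> F"
    using enu[of F] Fb snu FU(3) unfolding S_def by (simp add: Int_absorb1)
  ultimately have "emeasure \<mu> F > 0" by simp
  moreover have "compact F"
  proof -
    have "compact (L \<inter> F)" using L(1) FU(1) by (rule compact_Int_closed)
    moreover have "L \<inter> F = F" using FU(3) unfolding S_def by blast
    ultimately show ?thesis by simp
  qed
  moreover have "F \<subseteq> C" using FU(3) unfolding S_def by blast
  ultimately show ?thesis by blast
qed

lemma steinhaus:
  fixes C :: "'a set"
  assumes C: "C \<in> sets borel" and pos: "emeasure \<mu> C > 0"
  shows "\<exists>W. open W \<and> 0 \<in> W \<and> (\<forall>y\<in>W. emeasure \<mu> (C \<inter> (\<lambda>x. y + x) ` C) > 0)"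
proof -
  obtain K where K: "compact K" "K \<subseteq> C" "emeasure \<mu> K > 0" using inner_compact[OF C pos] by blast
  obtain U where U: "open U" "K \<subseteq> U" "emeasure \<mu> U < emeasure \<mu> K + emeasure \<mu> K"
    using outer_compact[OF K(1) K(3)] by blast
  define Wp where "Wp = (\<lambda>p::'a \<times> 'a. fst p + snd p) -` U"
  have "open Wp" unfolding Wp_def by (rule open_vimage[OF U(1) c1])
  moreover have "{0} \<times> K \<subseteq> Wp" unfolding Wp_def using U(2) by auto
  ultimately obtain X0 where X0: "0 \<in> X0" "open X0" "X0 \<times> K \<subseteq> Wp"
    using Elementary_Topology.tube_lemma[OF K(1)] by metis
  have "emeasure \<mu> (C \<inter> (\<lambda>x. y + x) ` C) > 0" if y: "y \<in> X0" for y
  proof -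
    have yK: "(\<lambda>x. y + x) ` K \<subseteq> U" using X0(3) y unfolding Wp_def by auto
    have Kb: "K \<in> sets \<mu>" using K(1) by (simp add: borel_closed compact_imp_closed)
    have yKb: "(\<lambda>x. y + x) ` K \<in> sets \<mu>" using Kb by (simp add: transl_borel)
    have eyK: "emeasure \<mu> ((\<lambda>x. y + x) ` K) = emeasure \<mu> K" using Kb by (simp add: transl_emeasure)
    have "emeasure \<mu> (K \<inter> (\<lambda>x. y + x) ` K) > 0"
    proof (rule ccontr)
      assume "\<not> ?thesis"
      then have z: "emeasure \<mu> (K \<inter> (\<lambda>x. y + x) ` K) = 0" by simp
      have "emeasure \<mu> K + emeasure \<mu> ((\<lambda>x. y + x) ` K)
          = emeasure \<mu> (K \<union> (\<lambda>x. y + x) ` K) + emeasure \<mu> (K \<inter> (\<lambda>x. y + x) ` K)"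
        by (rule emeasure_Un_Int[OF Kb yKb])
      also have "\<dots> = emeasure \<mu> (K \<union> (\<lambda>x. y + x) ` K)" using z by simp
      also have "\<dots> \<le> emeasure \<mu> U"
        by (rule emeasure_mono) (use yK U in \<open>auto intro: borel_open\<close>)
      finally have "emeasure \<mu> K + emeasure \<mu> K \<le> emeasure \<mu> U" using eyK by simp
      then show False using U(3) by simp
    qed
    moreover have "K \<inter> (\<lambda>x. y + x) ` K \<subseteq> C \<inter> (\<lambda>x. y + x) ` C" using K(2) by blast
    ultimately show ?thesis
      using emeasure_mono[of "K \<inter> (\<lambda>x. y + x) ` K" "C \<inter> (\<lambda>x. y + x) ` C" \<mu>] C
      by (simp add: transl_borel)
  qed
  then show ?thesis using X0 by blast
qed

lemma marg_equiv_refl: "marg_equiv \<mu> S S"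
proof -
  have "haar_null \<mu> {}" unfolding haar_null_def by (intro bexI[of _ "{}"]) auto
  then show ?thesis unfolding marg_equiv_def marginally_null_def by blast
qed

lemma closed_omega_closed:
  fixes Om :: "('a \<times> 'a) set"
  assumes "closed Om"
  shows "omega_closed \<mu> Om"
proof -
  define W where "W = - Om"
  have oW: "open W" unfolding W_def using assms by (simp add: open_Compl)
  obtain BB :: "'a set set" where BB: "countable BB" "topological_basis BB"
    using ex_countable_basis by blast
  define R where "R = {(A, B). A \<in> BB \<and> B \<in> BB \<and> A \<times> B \<subseteq> W}"
  define T where "T = insert ({}, {}) R"
  have "countable R"
    by (rule countable_subset[of _ "BB \<times> BB"]) (auto simp: R_def BB(1))
  then have cT: "countable T" unfolding T_def by simp
  have rT: "range (from_nat_into T) = T" by (rule range_from_nat_into[OF _ cT]) (simp add: T_def)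
  define A where "A n = fst (from_nat_into T n)" for n
  define B where "B n = snd (from_nat_into T n)" for n
  have memT: "\<And>n. from_nat_into T n \<in> T" using rT by blast
  have AB: "A n \<in> sets borel \<and> B n \<in> sets borel \<and> A n \<times> B n \<subseteq> W" for n
  proof -
    from memT[of n] have "from_nat_into T n = ({}, {}) \<or> from_nat_into T n \<in> R" unfolding T_def by blast
    then show ?thesis
    proof
      assume "from_nat_into T n = ({}, {})" then show ?thesis by (simp add: A_def B_def)
    next
      assume "from_nat_into T n \<in> R"
      then show ?thesis unfolding R_def A_def B_def
        using topological_basis_open[OF BB(2)] by (auto intro!: borel_open)
    qed
  qed
  have eq: "(\<Union>n. A n \<times> B n) = W"
  proof
    show "(\<Union>n. A n \<times> B n) \<subseteq> W" using AB by blast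
  next
    show "W \<subseteq> (\<Union>n. A n \<times> B n)"
    proof
      fix p assume "p \<in> W"
      obtain a b where p: "p = (a, b)" by (cases p)
      from open_prod_elim[OF oW \<open>p \<in> W\<close>] obtain U V where UV: "open U" "open V" "p \<in> U \<times> V" "U \<times> V \<subseteq> W" .
      from topological_basisE[OF BB(2) UV(1)] UV(3) p obtain U' where U': "U' \<in> BB" "a \<in> U'" "U' \<subseteq> U" by auto
      from topological_basisE[OF BB(2) UV(2)] UV(3) p obtain V' where V': "V' \<in> BB" "b \<in> V'" "V' \<subseteq> V" by auto
      have "(U', V') \<in> R" unfolding R_def using U' V' UV(4) by auto
      then have "(U', V') \<in> T" unfolding T_def by simp
      then obtain n where "from_nat_into T n = (U', V')" using rT by (metis rangeE)
      then have "A n = U'" "B n = V'" by (simp_all add: A_def B_def)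
      then show "p \<in> (\<Union>n. A n \<times> B n)" using p U'(2) V'(2) by blast
    qed
  qed
  show ?thesis
    unfolding omega_closed_def omega_open_def
    using AB eq marg_equiv_refl[of W] unfolding W_def by metis
qed

lemma transl_null:
  fixes N :: "'a set"
  assumes "N \<in> null_sets \<mu>"
  shows "(\<lambda>z. x + z) ` N \<in> null_sets \<mu>"
  using assms transl_borel[of N x] transl_emeasure[of N x] by (auto simp: null_sets_def)

lemma haar_null_E:
  assumes "haar_null \<mu> X"
  obtains N where "N \<in> null_sets \<mu>" "X \<subseteq> N"
  using assms unfolding haar_null_def null_sets_def by blast

lemma inv_diff:
  fixes Om :: "('a \<times> 'a) set"
  assumes inv: "\<forall>r. (\<lambda>(s, t). (s + r, t + r)) ` Om = Om"
    and eq: "s - t = s' - t'"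
  shows "(s, t) \<in> Om \<longleftrightarrow> (s', t') \<in> Om"
proof -
  have fw: "(a + r, b + r) \<in> Om" if "(a, b) \<in> Om" for a b r
  proof -
    have "(\<lambda>(s, t). (s + r, t + r)) (a, b) \<in> (\<lambda>(s, t). (s + r, t + r)) ` Om" using that by (rule imageI)
    then show ?thesis using inv by simp
  qed
  define r where "r = - t + t'"
  have 1: "s + r = s'"
  proof -
    have "s + r = (s - t) + t'" unfolding r_def by (simp only: add.assoc[symmetric] diff_conv_add_uminus)
    also have "\<dots> = s'" using eq by simp
    finally show ?thesis .
  qed
  have 2: "t + r = t'" by (simp add: r_def add.assoc[symmetric])
  have 3: "s' + - r = s" unfolding 1[symmetric] by (simp add: add.assoc)
  have 4: "t' + - r = t" unfolding 2[symmetric] by (simp add: add.assoc)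
  show ?thesis
  proof
    assume "(s, t) \<in> Om" then show "(s', t') \<in> Om" using fw[of s t r] 1 2 by simp
  next
    assume "(s', t') \<in> Om" then show "(s, t) \<in> Om" using fw[of s' t' "- r"] 3 4 by simp
  qed
qed

lemma omega_closed_invariant_closed:
  fixes Om Om1 :: "('a \<times> 'a) set"
  assumes inv: "\<forall>r. (\<lambda>(s, t). (s + r, t + r)) ` Om = Om"
    and oc: "omega_closed \<mu> Om1" and me: "marg_equiv \<mu> Om Om1"
  shows "closed Om"
proof -
  from oc obtain A B :: "nat \<Rightarrow> 'a set" where AB: "\<And>n. A n \<in> sets borel" "\<And>n. B n \<in> sets borel"
    and me2: "marg_equiv \<mu> (- Om1) (\<Union>n. A n \<times> B n)"
    unfolding omega_closed_def omega_open_def by blast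
  from me obtain X1 where X1: "haar_null \<mu> X1" "(Om - Om1) \<union> (Om1 - Om) \<subseteq> (X1 \<times> UNIV) \<union> (UNIV \<times> X1)"
    unfolding marg_equiv_def marginally_null_def by blast
  from me2 obtain X2 where X2: "haar_null \<mu> X2"
    "(- Om1 - (\<Union>n. A n \<times> B n)) \<union> ((\<Union>n. A n \<times> B n) - - Om1) \<subseteq> (X2 \<times> UNIV) \<union> (UNIV \<times> X2)"
    unfolding marg_equiv_def marginally_null_def by blast
  obtain N1 where N1: "N1 \<in> null_sets \<mu>" "X1 \<subseteq> N1" using haar_null_E[OF X1(1)] .
  obtain N2 where N2: "N2 \<in> null_sets \<mu>" "X2 \<subseteq> N2" using haar_null_E[OF X2(1)] .
  define N where "N = N1 \<union> N2"
  have N: "N \<in> null_sets \<mu>" unfolding N_def using N1 N2 by auto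
  have Key: "(s, t) \<notin> Om \<longleftrightarrow> (\<exists>n. s \<in> A n \<and> t \<in> B n)" if "s \<notin> N" "t \<notin> N" for s t
  proof -
    have "(s, t) \<notin> (X1 \<times> UNIV) \<union> (UNIV \<times> X1)" "(s, t) \<notin> (X2 \<times> UNIV) \<union> (UNIV \<times> X2)"
      using that N1(2) N2(2) unfolding N_def by auto
    then have "(s, t) \<in> Om \<longleftrightarrow> (s, t) \<in> Om1" "(s, t) \<notin> Om1 \<longleftrightarrow> (s, t) \<in> (\<Union>n. A n \<times> B n)"
      using X1(2) X2(2) by blast+
    then show ?thesis by blast
  qed
  show "closed Om"
    unfolding closed_def open_subopen[of "- Om"]
  proof
    fix p assume "p \<in> - Om"
    obtain s t where p: "p = (s, t)" by (cases p)
    define x where "x = s - t"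
    have notx: "(a, b) \<notin> Om" if "a - b = x" for a b
      using inv_diff[OF inv, of s t a b] \<open>p \<in> - Om\<close> that p unfolding x_def by auto
    have "\<exists>n. emeasure \<mu> (A n \<inter> (\<lambda>z. x + z) ` B n) \<noteq> 0"
    proof (rule ccontr)
      assume "\<not> ?thesis"
      then have z: "\<And>n. A n \<inter> (\<lambda>z. x + z) ` B n \<in> null_sets \<mu>"
        using AB by (auto simp: null_sets_def transl_borel)
      have "(\<Union>n. A n \<inter> (\<lambda>z. x + z) ` B n) \<in> null_sets \<mu>"
        using z by (intro null_sets_UN) auto
      then have nn: "N \<union> (\<lambda>z. x + z) ` N \<union> (\<Union>n. A n \<inter> (\<lambda>z. x + z) ` B n) \<in> null_sets \<mu>"
        using N transl_null[OF N, of x] by auto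
      have "UNIV \<subseteq> N \<union> (\<lambda>z. x + z) ` N \<union> (\<Union>n. A n \<inter> (\<lambda>z. x + z) ` B n)"
      proof
        fix a :: 'a
        assume "a \<in> UNIV"
        show "a \<in> N \<union> (\<lambda>z. x + z) ` N \<union> (\<Union>n. A n \<inter> (\<lambda>z. x + z) ` B n)"
        proof (cases "a \<in> N \<or> a \<in> (\<lambda>z. x + z) ` N")
          case True then show ?thesis by blast
        next
          case False
          define b where "b = - x + a"
          have ab: "a = x + b" unfolding b_def by (simp add: add.assoc[symmetric])
          have "b \<notin> N" using False ab by blast
          moreover have "a \<notin> N" using False by blast
          moreover have "a - b = x" unfolding b_def by (simp add: diff_conv_add_uminus minus_add add.assoc[symmetric])
          ultimately obtain n where "a \<in> A n" "b \<in> B n" using Key[of a b] notx[of a b] by blast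
          then show ?thesis using ab by blast
        qed
      qed
      then have "UNIV \<in> null_sets \<mu>" using null_sets_subset[OF nn] by simp
      moreover have "emeasure \<mu> UNIV > 0" by (rule open_pos) auto
      ultimately show False by (simp add: null_sets_def)
    qed
    then obtain n where n: "emeasure \<mu> (A n \<inter> (\<lambda>z. x + z) ` B n) \<noteq> 0" by blast
    define C where "C = A n \<inter> (\<lambda>z. x + z) ` B n"
    have Cb: "C \<in> sets borel" unfolding C_def using AB by (simp add: transl_borel)
    have "emeasure \<mu> C > 0" using n unfolding C_def by (simp add: zero_less_iff_neq_zero)
    from steinhaus[OF Cb this] obtain W where W: "open W" "0 \<in> W"
      "\<And>y. y \<in> W \<Longrightarrow> emeasure \<mu> (C \<inter> (\<lambda>w. y + w) ` C) > 0" by blast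
    define f where "f = (\<lambda>q::'a \<times> 'a. fst q - snd q - x)"
    have cf: "continuous_on UNIV f" unfolding f_def
      by (intro cont_diff continuous_on_fst continuous_on_snd continuous_on_id continuous_on_const)
    define T where "T = f -` W"
    have "open T" unfolding T_def by (rule open_vimage[OF W(1) cf])
    moreover have "p \<in> T" unfolding T_def f_def p x_def using W(2) by simp
    moreover have "T \<subseteq> - Om"
    proof
      fix q assume "q \<in> T"
      obtain s2 t2 where q: "q = (s2, t2)" by (cases q)
      define y where "y = s2 - t2 - x"
      define zz where "zz = s2 - t2"
      have yW: "y \<in> W" using \<open>q \<in> T\<close> unfolding T_def f_def y_def q by simp
      have zz: "zz = y + x" unfolding y_def zz_def by simp
      define D where "D = C \<inter> (\<lambda>w. y + w) ` C"
      have Dpos: "emeasure \<mu> D > 0" unfolding D_def using W(3)[OF yW] .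
      have "\<exists>a\<in>D. a \<notin> N \<and> a \<notin> (\<lambda>w. zz + w) ` N"
      proof (rule ccontr)
        assume "\<not> ?thesis"
        then have "D \<subseteq> N \<union> (\<lambda>w. zz + w) ` N" by blast
        moreover have "N \<union> (\<lambda>w. zz + w) ` N \<in> null_sets \<mu>" using N transl_null[OF N, of zz] by auto
        moreover have "D \<in> sets \<mu>" unfolding D_def using Cb by (simp add: transl_borel)
        ultimately have "D \<in> null_sets \<mu>" by (metis null_sets_subset)
        then show False using Dpos by (simp add: null_sets_def)
      qed
      then obtain a where a: "a \<in> D" "a \<notin> N" "a \<notin> (\<lambda>w. zz + w) ` N" by blast
      from a(1) obtain c where c: "c \<in> C" "a = y + c" unfolding D_def by blast
      from c(1) obtain b where b: "b \<in> B n" "c = x + b" "a \<in> A n \<or> True" unfolding C_def by blast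
      have aA: "a \<in> A n" using a(1) unfolding D_def C_def by blast
      have ab: "a = zz + b" using c(2) b(2) zz by (simp add: add.assoc)
      have "b \<notin> N" using a(3) ab by blast
      then have "(a, b) \<notin> Om" using Key[OF a(2)] aA b(1) by blast
      moreover have "a - b = s2 - t2" using ab unfolding zz_def by simp
      ultimately have "(s2, t2) \<notin> Om" using inv_diff[OF inv, of a b s2 t2] by blast
      then show "q \<in> - Om" using q by simp
    qed
    ultimately show "\<exists>T. open T \<and> p \<in> T \<and> T \<subseteq> - Om" by blast
  qed
qed

end

theorem corollary3p9:
  fixes \<mu> :: "'a::{group_add, t2_space, second_countable_topology} measure"
    and \<Omega> :: "('a \<times> 'a) set"
  assumes "locally_compact_group TYPE('a)"
    and "left_haar_measure \<mu>"
    and "\<forall>r. (\<lambda>(s, t). (s + r, t + r)) ` \<Omega> = \<Omega>"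
  shows "(\<exists>\<Omega>'. omega_closed \<mu> \<Omega>' \<and> marg_equiv \<mu> \<Omega> \<Omega>') \<longleftrightarrow>
         (\<exists>\<Omega>'. closed \<Omega>' \<and> marg_equiv \<mu> \<Omega> \<Omega>')"
proof -
  interpret lcg \<mu> by (rule lcg.intro[OF assms(1,2)])
  show ?thesis
  proof
    assume "\<exists>\<Omega>'. omega_closed \<mu> \<Omega>' \<and> marg_equiv \<mu> \<Omega> \<Omega>'"
    then obtain \<Omega>' where "omega_closed \<mu> \<Omega>'" "marg_equiv \<mu> \<Omega> \<Omega>'" by blast
    then have "closed \<Omega>" by (rule omega_closed_invariant_closed[OF assms(3)])
    then show "\<exists>\<Omega>'. closed \<Omega>' \<and> marg_equiv \<mu> \<Omega> \<Omega>'" using marg_equiv_refl[of \<Omega>] by blast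
  next
    assume "\<exists>\<Omega>'. closed \<Omega>' \<and> marg_equiv \<mu> \<Omega> \<Omega>'"
    then obtain \<Omega>' where "closed \<Omega>'" "marg_equiv \<mu> \<Omega> \<Omega>'" by blast
    then show "\<exists>\<Omega>'. omega_closed \<mu> \<Omega>' \<and> marg_equiv \<mu> \<Omega> \<Omega>'"
      using closed_omega_closed by blast
  qed
qed

end
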